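(* Let $K$ be an algebraically closed field of characteristic $0$ and let $X$ be a finite set of distinct points in $\mathbb{P}^1\times\mathbb{P}^1\times\mathbb{P}^1$ over $K$, with $t_1=|\pi_1(X)|$ and $t_2=|\pi_2(X)|$. Suppose $\mathcal{L}$ is a line of type $(1,1,0)$ with $X\cap\mathcal{L}\neq\emptyset$ but $X\not\subseteq\mathcal{L}$. Set $X_2=X\cap\mathcal{L}$ and $X_1=X\setminus X_2$. Then $R_{t_1-1,t_2-1,0}=(I(X_1)+I(X_2))_{t_1-1,t_2-1,0}$. Consequently, $\dim_K\big(R/(I(X_1)+I(X_2))\big)_{t_1-1,t_2-1,k}=0$ for all $k\ge0$.
   Context: Let $R=K[x_0,x_1,y_0,y_1,z_0,z_1]$ be $\mathbb{N}^3$-graded with $\deg x_i=(1,0,0)$, $\deg y_i=(0,1,0)$, $\deg z_i=(0,0,1)$. For a point $P=[a_0:a_1]\times[b_0:b_1]\times[c_0:c_1]$, $I(P)=(a_1x_0-a_0x_1,\,b_1y_0-b_0y_1,\,c_1z_0-c_0z_1)$, and for a finite set $Y=\{P_1,\dots,P_s\}$, $I(Y)=\bigcap_i I(P_i)$. $\pi_i$ denotes the projection onto the $i$-th factor $\mathbb{P}^1$. A line of type $(1,1,0)$ is the subvariety defined by an ideal $(L,L')$ with $L\in R_{1,0,0}$, $L'\in R_{0,1,0}$ nonzero. *)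

theory Defs
  imports "HOL-Library.Poly_Mapping" "HOL-Computational_Algebra.Polynomial"
begin

text \<open>The polynomial ring R = K[x0,x1,y0,y1,z0,z1] is modelled inside
  the type of finitely supported polynomials (nat \<Rightarrow>0 nat) \<Rightarrow>0 K, using only
  the variables 0..5, with x0 = 0, x1 = 1, y0 = 2, y1 = 3, z0 = 4, z1 = 5.\<close>

type_synonym 'a mpoly6 = "(nat \<Rightarrow>\<^sub>0 nat) \<Rightarrow>\<^sub>0 'a"

definition Var :: "nat \<Rightarrow> 'a::comm_ring_1 mpoly6" where
  "Var i = Poly_Mapping.single (Poly_Mapping.single i 1) 1"

definition Const :: "'a::comm_ring_1 \<Rightarrow> 'a mpoly6" where
  "Const c = Poly_Mapping.single 0 c"

definition mono6 :: "(nat \<Rightarrow>\<^sub>0 nat) \<Rightarrow> bool" where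
  "mono6 m \<longleftrightarrow> (\<forall>i. 6 \<le> i \<longrightarrow> Poly_Mapping.lookup m i = 0)"

definition tridegree :: "(nat \<Rightarrow>\<^sub>0 nat) \<Rightarrow> nat \<times> nat \<times> nat" where
  "tridegree m = (Poly_Mapping.lookup m 0 + Poly_Mapping.lookup m 1, Poly_Mapping.lookup m 2 + Poly_Mapping.lookup m 3, Poly_Mapping.lookup m 4 + Poly_Mapping.lookup m 5)"

definition Rring :: "'a::comm_ring_1 mpoly6 set" where
  "Rring = {f. \<forall>m\<in>Poly_Mapping.keys f. mono6 m}"

definition Rdeg :: "nat \<times> nat \<times> nat \<Rightarrow> 'a::comm_ring_1 mpoly6 set" where
  "Rdeg d = {f. \<forall>m\<in>Poly_Mapping.keys f. mono6 m \<and> tridegree m = d}"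

definition gen_ideal :: "'a::comm_ring_1 mpoly6 set \<Rightarrow> 'a mpoly6 set" where
  "gen_ideal G = {(\<Sum>g\<in>S. c g * g) | S c. finite S \<and> S \<subseteq> G \<and> (\<forall>g\<in>S. c g \<in> Rring)}"

definition ideal_sum :: "'a::comm_ring_1 mpoly6 set \<Rightarrow> 'a mpoly6 set \<Rightarrow> 'a mpoly6 set" where
  "ideal_sum I J = {f + g | f g. f \<in> I \<and> g \<in> J}"

text \<open>Points of P1 x P1 x P1 are given by representatives ((a0,a1),(b0,b1),(c0,c1)).\<close>
type_synonym 'a pt3 = "('a \<times> 'a) \<times> ('a \<times> 'a) \<times> ('a \<times> 'a)"

definition valid_pt :: "'a::field pt3 \<Rightarrow> bool" where
  "valid_pt P \<longleftrightarrow> fst P \<noteq> (0,0) \<and> fst (snd P) \<noteq> (0,0) \<and> snd (snd P) \<noteq> (0,0)"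

text \<open>The point of P1 represented by a nonzero vector v (its set of representatives).\<close>
definition proj_class :: "'a::field \<times> 'a \<Rightarrow> ('a \<times> 'a) set" where
  "proj_class v = {w. w \<noteq> (0,0) \<and> fst v * snd w = snd v * fst w}"

definition same_pt :: "'a::field pt3 \<Rightarrow> 'a pt3 \<Rightarrow> bool" where
  "same_pt P Q \<longleftrightarrow> proj_class (fst P) = proj_class (fst Q) \<and>
     proj_class (fst (snd P)) = proj_class (fst (snd Q)) \<and>
     proj_class (snd (snd P)) = proj_class (snd (snd Q))"

definition pi1 :: "'a::field pt3 \<Rightarrow> ('a \<times> 'a) set" where "pi1 P = proj_class (fst P)"
definition pi2 :: "'a::field pt3 \<Rightarrow> ('a \<times> 'a) set" where "pi2 P = proj_class (fst (snd P))"

definition ideal_pt :: "'a::field pt3 \<Rightarrow> 'a mpoly6 set" where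
  "ideal_pt P = (case P of ((a0,a1),(b0,b1),(c0,c1)) \<Rightarrow>
     gen_ideal {Const a1 * Var 0 - Const a0 * Var 1,
                Const b1 * Var 2 - Const b0 * Var 3,
                Const c1 * Var 4 - Const c0 * Var 5})"

definition ideal_pts :: "'a::field pt3 set \<Rightarrow> 'a mpoly6 set" where
  "ideal_pts Y = Rring \<inter> (\<Inter>P\<in>Y. ideal_pt P)"

definition coord :: "'a pt3 \<Rightarrow> nat \<Rightarrow> 'a::comm_ring_1" where
  "coord P i = (case P of ((a0,a1),(b0,b1),(c0,c1)) \<Rightarrow>
     (if i = 0 then a0 else if i = 1 then a1 else if i = 2 then b0 else if i = 3 then b1
      else if i = 4 then c0 else if i = 5 then c1 else 0))"

definition eval_pt :: "'a::comm_ring_1 mpoly6 \<Rightarrow> 'a pt3 \<Rightarrow> 'a" where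
  "eval_pt f P = (\<Sum>m\<in>Poly_Mapping.keys f. Poly_Mapping.lookup f m * (\<Prod>i\<in>Poly_Mapping.keys m. coord P i ^ Poly_Mapping.lookup m i))"

end

theory Submission
  imports Defs
begin

lemma lookup_Cm: "Poly_Mapping.lookup (Const c * p) m = c * Poly_Mapping.lookup p m"
proof -
  have "Const c * p = Poly_Mapping.map ((*) c) p"
    by (simp add: Const_def mult_map_scale_conv_mult)
  thus ?thesis by (simp add: map.rep_eq when_def)
qed

lemma Const_mult: "Const a * Const b = Const (a * b)"
  by (simp add: Const_def mult_single)
lemma Const_1: "Const 1 = 1" by (simp add: Const_def)
lemma Const_0: "Const 0 = 0" by (simp add: Const_def)

lemma lookup_Var: "Poly_Mapping.lookup (Var i) m = (if m = Poly_Mapping.single i 1 then 1 else 0)"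
  by (simp add: Var_def lookup_single when_def)

lemma mono6_add: "mono6 a \<Longrightarrow> mono6 b \<Longrightarrow> mono6 (a + b)"
  by (simp add: mono6_def lookup_add)

lemma Rring_mult: "f \<in> Rring \<Longrightarrow> g \<in> Rring \<Longrightarrow> f * g \<in> Rring"
  unfolding Rring_def using keys_mult[of f g] mono6_add by blast

lemma Rring_add: "f \<in> Rring \<Longrightarrow> g \<in> Rring \<Longrightarrow> f + g \<in> Rring"
  unfolding Rring_def using keys_add[of f g] by blast

lemma Rring_diff: "f \<in> Rring \<Longrightarrow> (g::'a::comm_ring_1 mpoly6) \<in> Rring \<Longrightarrow> f - g \<in> Rring"
  unfolding Rring_def using keys_diff[of f g] by blast

lemma Rring_0: "0 \<in> Rring" by (simp add: Rring_def)

lemma Rring_Const: "Const c \<in> Rring"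
  by (simp add: Rring_def Const_def mono6_def)

lemma Rring_Var: "i < 6 \<Longrightarrow> Var i \<in> Rring"
  by (simp add: Rring_def Var_def mono6_def lookup_single when_def)

lemma Rring_prod: "(\<And>s. s \<in> S \<Longrightarrow> f s \<in> Rring) \<Longrightarrow> prod f S \<in> Rring"
  by (induction S rule: infinite_finite_induct)
     (auto intro: Rring_mult simp: Rring_Const[of 1, unfolded Const_1])

lemma Rring_sum: "(\<And>s. s \<in> S \<Longrightarrow> f s \<in> Rring) \<Longrightarrow> sum f S \<in> Rring"
  by (induction S rule: infinite_finite_induct) (auto intro: Rring_add Rring_0)

lemma Rring_single: "mono6 m \<Longrightarrow> Poly_Mapping.single m c \<in> Rring"
  by (simp add: Rring_def)

lemma mono6_single: "i < 6 \<Longrightarrow> mono6 (Poly_Mapping.single i n)"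
  by (simp add: mono6_def lookup_single when_def)

lemma gen_ideal_one: "g \<in> G \<Longrightarrow> c \<in> Rring \<Longrightarrow> c * g \<in> gen_ideal G"
  unfolding gen_ideal_def
  by (rule CollectI, rule exI[of _ "{g}"], rule exI[of _ "\<lambda>_. c"]) auto

lemma gen_ideal_two: assumes "g \<in> G" "h \<in> G" "c \<in> Rring" "d \<in> Rring" shows "c * g + d * h \<in> gen_ideal G"
proof (cases "g = h")
  case True
  then show ?thesis using gen_ideal_one[of g G "c + d"] Rring_add[of c d] assms
    by (simp add: distrib_right)
next
  case False
  show ?thesis
    unfolding gen_ideal_def
    apply (rule CollectI, rule exI[of _ "{g,h}"], rule exI[of _ "\<lambda>x. if x = g then c else d"])
    using False assms by auto
qed

definition ell :: "nat \<Rightarrow> nat \<Rightarrow> 'a \<times> 'a \<Rightarrow> 'a::comm_ring_1 mpoly6" where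
  "ell u v w = Const (snd w) * Var u - Const (fst w) * Var v"

lemma ideal_pt_ell: "ideal_pt P = gen_ideal {ell 0 1 (fst P), ell 2 3 (fst (snd P)), ell 4 5 (snd (snd P))}"
  by (cases P) (auto simp: ideal_pt_def ell_def)

lemma Rring_ell: "u < 6 \<Longrightarrow> v < 6 \<Longrightarrow> ell u v w \<in> Rring"
  by (simp add: ell_def Rring_diff Rring_mult Rring_Const Rring_Var)

lemma Const_uminus: "Const (- a) = - Const a" by (simp add: Const_def single_uminus)
lemma lookup_Cdiff: "Poly_Mapping.lookup (Const a * (X - Y)) m = a * (Poly_Mapping.lookup X m - Poly_Mapping.lookup Y m)"
  by (simp add: lookup_Cm lookup_minus)

lemma div_help: "(x::'a::field) \<noteq> 0 \<Longrightarrow> e = x * a \<Longrightarrow> a = 1 / x * e" by simp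

lemma lin_u:
  fixes c0 c1 :: "'a::field"
  assumes "c0 * fst w + c1 * snd w \<noteq> 0"
  shows "Var u = Const (1 / (- (c0 * fst w + c1 * snd w))) *
     (Const (- fst w) * (Const c0 * Var u + Const c1 * Var v) - Const c1 * ell u v w)"
proof (rule poly_mapping_eqI)
  fix m
  define a where "a = Poly_Mapping.lookup (Var u :: 'a mpoly6) m"
  define b where "b = Poly_Mapping.lookup (Var v :: 'a mpoly6) m"
  have "a = (1 / (- (c0 * fst w + c1 * snd w))) * ((- fst w) * (c0 * a + c1 * b) - c1 * (snd w * a - fst w * b))"
  proof -
    have "(- fst w) * (c0 * a + c1 * b) - c1 * (snd w * a - fst w * b) = (- (c0 * fst w + c1 * snd w)) * a"
      by (simp add: algebra_simps)
    moreover have "- (c0 * fst w + c1 * snd w) \<noteq> 0" using assms by (simp only: neg_equal_0_iff_equal) simp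
    ultimately show ?thesis by (intro div_help)
  qed
  thus "Poly_Mapping.lookup (Var u) m = Poly_Mapping.lookup (Const (1 / (- (c0 * fst w + c1 * snd w))) *
     (Const (- fst w) * (Const c0 * Var u + Const c1 * Var v) - Const c1 * ell u v w)) m"
    by (simp add: lookup_Cdiff lookup_Cm lookup_add lookup_minus ell_def a_def b_def)
qed

lemma lin_v:
  fixes c0 c1 :: "'a::field"
  assumes "c0 * fst w + c1 * snd w \<noteq> 0"
  shows "Var v = Const (1 / (c0 * fst w + c1 * snd w)) *
     (Const (snd w) * (Const c0 * Var u + Const c1 * Var v) - Const c0 * ell u v w)"
proof (rule poly_mapping_eqI)
  fix m
  define a where "a = Poly_Mapping.lookup (Var u :: 'a mpoly6) m"
  define b where "b = Poly_Mapping.lookup (Var v :: 'a mpoly6) m"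
  have "b = (1 / (c0 * fst w + c1 * snd w)) * ((snd w) * (c0 * a + c1 * b) - c0 * (snd w * a - fst w * b))"
  proof -
    have "(snd w) * (c0 * a + c1 * b) - c0 * (snd w * a - fst w * b) = (c0 * fst w + c1 * snd w) * b"
      by (simp add: algebra_simps)
    thus ?thesis using assms by (intro div_help)
  qed
  thus "Poly_Mapping.lookup (Var v) m = Poly_Mapping.lookup (Const (1 / (c0 * fst w + c1 * snd w)) *
     (Const (snd w) * (Const c0 * Var u + Const c1 * Var v) - Const c0 * ell u v w)) m"
    by (simp add: lookup_Cdiff lookup_Cm lookup_add lookup_minus ell_def a_def b_def)
qed

lemma single_split_u: "Poly_Mapping.single (Poly_Mapping.single u (Suc i) + Poly_Mapping.single v j) (1::'a::comm_ring_1)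
   = Var u * Poly_Mapping.single (Poly_Mapping.single u i + Poly_Mapping.single v j) 1"
proof -
  have "Poly_Mapping.single u (Suc i) = Poly_Mapping.single u 1 + Poly_Mapping.single u i"
    by (simp add: single_add[symmetric])
  thus ?thesis by (simp add: Var_def mult_single add.assoc)
qed

lemma single_split_v: "Poly_Mapping.single (Poly_Mapping.single u i + Poly_Mapping.single v (Suc j)) (1::'a::comm_ring_1)
   = Var v * Poly_Mapping.single (Poly_Mapping.single u i + Poly_Mapping.single v j) 1"
proof -
  have "Poly_Mapping.single v (Suc j) = Poly_Mapping.single v 1 + Poly_Mapping.single v j"
    by (simp add: single_add[symmetric])
  thus ?thesis by (simp add: Var_def mult_single add_ac)
qed

lemma mono_T:
  fixes r :: "'b \<Rightarrow> 'a::field \<times> 'a"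
  assumes "finite S" "\<forall>s\<in>S. ca * fst (r s) + cb * snd (r s) \<noteq> 0" "u < 6" "v < 6"
  shows "\<forall>i j. i + j = card S \<longrightarrow> (\<exists>\<kappa> p. p \<in> Rring \<and>
     Poly_Mapping.single (Poly_Mapping.single u i + Poly_Mapping.single v j) 1
       = Const \<kappa> * (\<Prod>s\<in>S. ell u v (r s)) + (Const ca * Var u + Const cb * Var v) * p)"
  using assms
proof (induction S rule: finite_induct)
  case empty
  show ?case
  proof (intro allI impI)
    fix i j :: nat assume "i + j = card ({}::'b set)"
    hence "i = 0" "j = 0" by auto
    thus "\<exists>\<kappa> p. p \<in> Rring \<and>
     Poly_Mapping.single (Poly_Mapping.single u i + Poly_Mapping.single v j) 1
       = Const \<kappa> * (\<Prod>s\<in>{}. ell u v (r s)) + (Const ca * Var u + Const cb * Var v) * (p::'a mpoly6)"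
      by (intro exI[of _ 1] exI[of _ 0]) (simp add: Rring_0 Const_1)
  qed
next
  case (insert s S)
  define Lf :: "'a mpoly6" where "Lf = Const ca * Var u + Const cb * Var v"
  define G where "G = (\<Prod>s\<in>S. ell u v (r s))"
  define w where "w = r s"
  define l where "l = ell u v w"
  have G': "(\<Prod>s\<in>insert s S. ell u v (r s)) = l * G"
    using insert by (simp add: G_def l_def w_def)
  have wnz: "ca * fst w + cb * snd w \<noteq> 0" using insert by (simp add: w_def)
  have GR: "G \<in> Rring" unfolding G_def by (rule Rring_prod) (simp add: Rring_ell insert)
  have VuR: "Var u \<in> Rring" "Var v \<in> Rring" using insert by (auto intro: Rring_Var)
  show ?case
  proof (intro allI impI)
    fix i j assume ij: "i + j = card (insert s S)"
    hence ij': "i + j = Suc (card S)" using insert by simp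
    show "\<exists>\<kappa> p. p \<in> Rring \<and>
     Poly_Mapping.single (Poly_Mapping.single u i + Poly_Mapping.single v j) 1
       = Const \<kappa> * (\<Prod>s\<in>insert s S. ell u v (r s)) + (Const ca * Var u + Const cb * Var v) * p"
    proof (cases i)
      case (Suc i')
      then obtain \<kappa> p where p: "p \<in> Rring"
        "Poly_Mapping.single (Poly_Mapping.single u i' + Poly_Mapping.single v j) 1 = Const \<kappa> * G + Lf * p"
        using insert.IH insert.prems ij' unfolding G_def Lf_def by fastforce
      define D where "D = 1 / (- (ca * fst w + cb * snd w))"
      have Vu: "Var u = Const D * (Const (- fst w) * Lf - Const cb * l)"
        using lin_u[OF wnz, of u v] by (simp add: D_def Lf_def l_def)
      have e1: "Var u * (Const \<kappa> * G) = Const (D * (- cb) * \<kappa>) * (l * G) + Lf * (Const (D * (- fst w) * \<kappa>) * G)"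
        by (subst Vu) (simp only: Const_mult[symmetric] Const_uminus, algebra)
      have "Poly_Mapping.single (Poly_Mapping.single u i + Poly_Mapping.single v j) 1
          = Var u * (Const \<kappa> * G + Lf * p)" using Suc p by (simp add: single_split_u)
      also have "\<dots> = Const (D * (- cb) * \<kappa>) * (l * G) + Lf * (Const (D * (- fst w) * \<kappa>) * G + Var u * p)"
        using e1 by (simp add: algebra_simps)
      finally show ?thesis unfolding G' Lf_def[symmetric]
        by (intro exI conjI[rotated]) (auto intro!: Rring_add Rring_mult Rring_Const GR VuR p)
    next
      case 0
      then obtain j' where j': "j = Suc j'" using ij' by (cases j) auto
      then obtain \<kappa> p where p: "p \<in> Rring"
        "Poly_Mapping.single (Poly_Mapping.single u i + Poly_Mapping.single v j') 1 = Const \<kappa> * G + Lf * p"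
        using insert.IH insert.prems ij' unfolding G_def Lf_def by fastforce
      define D where "D = 1 / (ca * fst w + cb * snd w)"
      have Vv: "Var v = Const D * (Const (snd w) * Lf - Const ca * l)"
        using lin_v[OF wnz, of v u] by (simp add: D_def Lf_def l_def)
      have e1: "Var v * (Const \<kappa> * G) = Const (D * (- ca) * \<kappa>) * (l * G) + Lf * (Const (D * snd w * \<kappa>) * G)"
        by (subst Vv) (simp only: Const_mult[symmetric] Const_uminus, algebra)
      have "Poly_Mapping.single (Poly_Mapping.single u i + Poly_Mapping.single v j) 1
          = Var v * (Const \<kappa> * G + Lf * p)" using j' p by (simp add: single_split_v)
      also have "\<dots> = Const (D * (- ca) * \<kappa>) * (l * G) + Lf * (Const (D * snd w * \<kappa>) * G + Var v * p)"
        using e1 by (simp add: algebra_simps)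
      finally show ?thesis unfolding G' Lf_def[symmetric]
        by (intro exI conjI[rotated]) (auto intro!: Rring_add Rring_mult Rring_Const GR VuR p)
    qed
  qed
qed

lemma key_lin:
  fixes m :: "nat \<Rightarrow>\<^sub>0 nat"
  assumes "Poly_Mapping.lookup m u + Poly_Mapping.lookup m v = 1"
    "\<forall>k. k \<noteq> u \<and> k \<noteq> v \<longrightarrow> Poly_Mapping.lookup m k = 0"
  shows "m = Poly_Mapping.single u 1 \<or> m = Poly_Mapping.single v 1"
proof (cases "Poly_Mapping.lookup m u = 1")
  case True
  hence "Poly_Mapping.lookup m v = 0 \<or> u = v" using assms(1) by auto
  hence "m = Poly_Mapping.single u 1"
    using assms True by (intro poly_mapping_eqI) (auto simp: lookup_single when_def)
  thus ?thesis ..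
next
  case False
  hence "Poly_Mapping.lookup m v = 1" "Poly_Mapping.lookup m u = 0" using assms(1) by auto
  hence "m = Poly_Mapping.single v 1"
  proof (intro poly_mapping_eqI)
    fix k
    show "Poly_Mapping.lookup m k = Poly_Mapping.lookup (Poly_Mapping.single v 1) k"
      using assms \<open>Poly_Mapping.lookup m v = 1\<close> \<open>Poly_Mapping.lookup m u = 0\<close>
      by (cases "k = v"; cases "k = u") (auto simp: lookup_single when_def)
  qed
  thus ?thesis ..
qed

lemma keys_lin_form:
  fixes L :: "'a::comm_ring_1 mpoly6"
  assumes "Poly_Mapping.keys L \<subseteq> {Poly_Mapping.single u 1, Poly_Mapping.single v 1}" "u \<noteq> v"
  shows "L = Const (Poly_Mapping.lookup L (Poly_Mapping.single u 1)) * Var u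
           + Const (Poly_Mapping.lookup L (Poly_Mapping.single v 1)) * Var v"
proof (rule poly_mapping_eqI)
  fix m
  have "m \<notin> {Poly_Mapping.single u 1, Poly_Mapping.single v 1} \<Longrightarrow> Poly_Mapping.lookup L m = 0"
  proof -
    assume "m \<notin> {Poly_Mapping.single u 1, Poly_Mapping.single v 1}"
    hence "m \<notin> Poly_Mapping.keys L" using assms(1) by blast
    thus ?thesis by (simp add: in_keys_iff)
  qed
  moreover have "Poly_Mapping.single u (1::nat) \<noteq> Poly_Mapping.single v 1"
    using assms(2) by (metis lookup_single_eq lookup_single_not_eq zero_neq_one)
  ultimately show "Poly_Mapping.lookup L m = Poly_Mapping.lookup (Const (Poly_Mapping.lookup L (Poly_Mapping.single u 1)) * Var u
           + Const (Poly_Mapping.lookup L (Poly_Mapping.single v 1)) * Var v) m"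
    by (auto simp: lookup_add lookup_Cm lookup_Var)
qed

lemma eval_lin_form:
  fixes L :: "'a::comm_ring_1 mpoly6"
  assumes "Poly_Mapping.keys L \<subseteq> {Poly_Mapping.single u 1, Poly_Mapping.single v 1}" "u \<noteq> v"
  shows "eval_pt L P = Poly_Mapping.lookup L (Poly_Mapping.single u 1) * coord P u
           + Poly_Mapping.lookup L (Poly_Mapping.single v 1) * coord P v"
proof -
  have ne: "Poly_Mapping.single u (1::nat) \<noteq> Poly_Mapping.single v 1"
    using assms(2) by (metis lookup_single_eq lookup_single_not_eq zero_neq_one)
  have "eval_pt L P = (\<Sum>m\<in>{Poly_Mapping.single u 1, Poly_Mapping.single v 1}. Poly_Mapping.lookup L m * (\<Prod>i\<in>Poly_Mapping.keys m. coord P i ^ Poly_Mapping.lookup m i))"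
    unfolding eval_pt_def
  proof (rule sum.mono_neutral_left)
    show "\<forall>i\<in>{Poly_Mapping.single u 1, Poly_Mapping.single v 1} - Poly_Mapping.keys L.
       Poly_Mapping.lookup L i * (\<Prod>ia\<in>Poly_Mapping.keys i. coord P ia ^ Poly_Mapping.lookup i ia) = 0"
      by (simp add: in_keys_iff)
  qed (use assms(1) in auto)
  thus ?thesis using ne by simp
qed

lemma keys_deg100:
  fixes L :: "'a::comm_ring_1 mpoly6"
  assumes "L \<in> Rdeg (1,0,0)"
  shows "Poly_Mapping.keys L \<subseteq> {Poly_Mapping.single 0 1, Poly_Mapping.single 1 1}"
proof
  fix m :: "nat \<Rightarrow>\<^sub>0 nat" assume "m \<in> Poly_Mapping.keys L"
  hence m: "mono6 m" "tridegree m = (1,0,0)" using assms by (auto simp: Rdeg_def)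
  have "\<forall>k. k \<noteq> 0 \<and> k \<noteq> 1 \<longrightarrow> Poly_Mapping.lookup m k = 0"
  proof (intro allI impI)
    fix k :: nat assume k: "k \<noteq> 0 \<and> k \<noteq> 1"
    show "Poly_Mapping.lookup m k = 0"
    proof (cases "k < 6")
      case True
      hence "k = 2 \<or> k = 3 \<or> k = 4 \<or> k = 5" using k by auto
      thus ?thesis using m(2) by (auto simp: tridegree_def)
    next
      case False thus ?thesis using m(1) by (simp add: mono6_def)
    qed
  qed
  moreover have "Poly_Mapping.lookup m 0 + Poly_Mapping.lookup m 1 = 1" using m(2) by (simp add: tridegree_def)
  ultimately show "m \<in> {Poly_Mapping.single 0 1, Poly_Mapping.single 1 1}" using key_lin by blast
qed

lemma keys_deg010:
  fixes L :: "'a::comm_ring_1 mpoly6"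
  assumes "L \<in> Rdeg (0,1,0)"
  shows "Poly_Mapping.keys L \<subseteq> {Poly_Mapping.single 2 1, Poly_Mapping.single 3 1}"
proof
  fix m :: "nat \<Rightarrow>\<^sub>0 nat" assume "m \<in> Poly_Mapping.keys L"
  hence m: "mono6 m" "tridegree m = (0,1,0)" using assms by (auto simp: Rdeg_def)
  have "\<forall>k. k \<noteq> 2 \<and> k \<noteq> 3 \<longrightarrow> Poly_Mapping.lookup m k = 0"
  proof (intro allI impI)
    fix k :: nat assume k: "k \<noteq> 2 \<and> k \<noteq> 3"
    show "Poly_Mapping.lookup m k = 0"
    proof (cases "k < 6")
      case True
      hence "k = 0 \<or> k = 1 \<or> k = 4 \<or> k = 5" using k by auto
      thus ?thesis using m(2) by (auto simp: tridegree_def)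
    next
      case False thus ?thesis using m(1) by (simp add: mono6_def)
    qed
  qed
  moreover have "Poly_Mapping.lookup m 2 + Poly_Mapping.lookup m 3 = 1" using m(2) by (simp add: tridegree_def)
  ultimately show "m \<in> {Poly_Mapping.single 2 1, Poly_Mapping.single 3 1}" using key_lin by blast
qed

lemma v4: fixes a0 a1 b0 b1 :: "'a::field"
  assumes "(a0,a1) \<noteq> (0,0)" "a0*b1 = a1*b0"
  shows "\<exists>\<mu>. b0 = \<mu> * a0 \<and> b1 = \<mu> * a1"
proof (cases "a0 = 0")
  case True
  hence "a1 \<noteq> 0" "b0 = 0" using assms by auto
  thus ?thesis using True by (intro exI[of _ "b1 / a1"]) simp
next
  case False
  have "b1 = b0 / a0 * a1" using False assms(2) by (simp add: field_simps)
  thus ?thesis using False by (intro exI[of _ "b0 / a0"]) simp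
qed
lemma v5: fixes a0 a1 c0 c1 :: "'a::field"
  assumes "(a0,a1) \<noteq> (0,0)" "c0*a0 + c1*a1 = 0"
  shows "\<exists>\<kappa>. c0 = \<kappa> * a1 \<and> c1 = - \<kappa> * a0"
proof -
  have "a0 * c0 = a1 * (- c1)" using assms(2) by (simp add: algebra_simps add_eq_0_iff)
  then obtain \<mu> where "- c1 = \<mu> * a0" "c0 = \<mu> * a1" using v4[OF assms(1)] by blast
  thus ?thesis by (intro exI[of _ \<mu>]) (metis minus_minus mult_minus_left)
qed
lemma v1: fixes a0 a1 b0 b1 c0 c1 :: "'a::field"
  assumes "(c0,c1) \<noteq> (0,0)" "c0*a0 + c1*a1 = 0" "c0*b0+c1*b1 = 0"
  shows "a0*b1 = a1*b0"
proof -
  have c': "(c1, - c0) \<noteq> (0,0)" using assms(1) by auto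
  have "c1 * a1 = - c0 * a0" "c1 * b1 = - c0 * b0" using assms(2,3) by (simp_all add: algebra_simps add_eq_0_iff)
  then obtain m1 m2 where "a0 = m1 * c1" "a1 = m1 * - c0" "b0 = m2 * c1" "b1 = m2 * - c0"
    using v4[OF c', of a1 a0] v4[OF c', of b1 b0] by (metis mult.commute)
  thus ?thesis by simp
qed
lemma v2: fixes a0 a1 b0 b1 c0 c1 :: "'a::field"
  assumes "(a0,a1) \<noteq> (0,0)" "a0*b1 = a1*b0" "c0*a0 + c1*a1 = 0"
  shows "c0*b0+c1*b1 = 0"
proof -
  obtain \<mu> where "b0 = \<mu> * a0" "b1 = \<mu> * a1" using v4[OF assms(1,2)] by blast
  hence "c0*b0+c1*b1 = \<mu> * (c0*a0 + c1*a1)" by (simp add: algebra_simps)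
  thus ?thesis using assms(3) by simp
qed
lemma v3: fixes a0 a1 b0 b1 c0 c1 :: "'a::field"
  assumes "(a0,a1) \<noteq> (0,0)" "(b0,b1) \<noteq> (0,0)" "a0*b1 = a1*b0" "b0*c1 = b1*c0"
  shows "a0*c1 = a1*c0"
proof -
  obtain \<mu> where "b0 = \<mu> * a0" "b1 = \<mu> * a1" using v4[OF assms(1,3)] by blast
  moreover obtain \<nu> where "c0 = \<nu> * b0" "c1 = \<nu> * b1" using v4[OF assms(2,4)] by blast
  ultimately show ?thesis by simp
qed

lemma coord_simps: "coord P 0 = fst (fst P)" "coord P 1 = snd (fst P)"
  "coord P 2 = fst (fst (snd P))" "coord P 3 = snd (fst (snd P))"
  by (cases P; auto simp: coord_def)+

lemma mem_class: "w \<in> proj_class a \<longleftrightarrow> w \<noteq> (0,0) \<and> fst a * snd w = snd a * fst w"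
  by (simp add: proj_class_def)

lemma self_class: "a \<noteq> (0,0) \<Longrightarrow> a \<in> proj_class (a::'a::field \<times> 'a)"
  by (simp add: proj_class_def mult.commute)

lemma class_eq:
  fixes a b :: "'a::field \<times> 'a"
  assumes "a \<noteq> (0,0)" "b \<in> proj_class a"
  shows "proj_class b = proj_class a"
proof -
  have b: "b \<noteq> (0,0)" "fst a * snd b = snd a * fst b" using assms(2) by (auto simp: mem_class)
  have a': "(fst a, snd a) \<noteq> (0,0)" "(fst b, snd b) \<noteq> (0,0)" using assms(1) b(1) by auto
  have ba: "fst b * snd a = snd b * fst a" using b(2) by (simp add: mult.commute)
  show ?thesis
  proof (rule set_eqI)
    fix w
    show "w \<in> proj_class b \<longleftrightarrow> w \<in> proj_class a"
      unfolding mem_class using v3[OF a'(1) a'(2) b(2)] v3[OF a'(2) a'(1) ba] by blast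
  qed
qed

lemma pv4:
  fixes a b :: "'a::field \<times> 'a"
  assumes "a \<noteq> (0,0)" "fst a * snd b = snd a * fst b"
  shows "\<exists>\<mu>. fst b = \<mu> * fst a \<and> snd b = \<mu> * snd a"
  using v4[of "fst a" "snd a" "snd b" "fst b"] assms by (cases a) auto

lemma ell_scale:
  assumes "fst w = \<mu> * fst a" "snd w = \<mu> * snd a"
  shows "ell u v w = Const \<mu> * ell u v a"
  by (rule poly_mapping_eqI) (simp add: ell_def lookup_Cm lookup_minus assms, simp add: algebra_simps)

lemma lin_prop:
  assumes "c0 = \<kappa> * snd a" "c1 = - \<kappa> * fst a"
  shows "Const c0 * Var u + Const c1 * Var v = Const \<kappa> * ell u v a"
  by (rule poly_mapping_eqI) (simp add: ell_def lookup_Cm lookup_minus lookup_add assms, simp add: algebra_simps)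


lemma mono_decomp:
  fixes m :: "nat \<Rightarrow>\<^sub>0 nat"
  assumes "mono6 m"
  shows "Poly_Mapping.single m (1::'a::comm_ring_1) =
    Poly_Mapping.single (Poly_Mapping.single 0 (Poly_Mapping.lookup m 0) + Poly_Mapping.single 1 (Poly_Mapping.lookup m 1)) 1 *
    Poly_Mapping.single (Poly_Mapping.single 2 (Poly_Mapping.lookup m 2) + Poly_Mapping.single 3 (Poly_Mapping.lookup m 3)) 1 *
    Poly_Mapping.single (Poly_Mapping.single 4 (Poly_Mapping.lookup m 4) + Poly_Mapping.single 5 (Poly_Mapping.lookup m 5)) 1"
proof -
  have "m = Poly_Mapping.single 0 (Poly_Mapping.lookup m 0) + Poly_Mapping.single 1 (Poly_Mapping.lookup m 1) +
     (Poly_Mapping.single 2 (Poly_Mapping.lookup m 2) + Poly_Mapping.single 3 (Poly_Mapping.lookup m 3)) +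
     (Poly_Mapping.single 4 (Poly_Mapping.lookup m 4) + Poly_Mapping.single 5 (Poly_Mapping.lookup m 5))"
  proof (rule poly_mapping_eqI)
    fix k :: nat
    show "Poly_Mapping.lookup m k = Poly_Mapping.lookup (Poly_Mapping.single 0 (Poly_Mapping.lookup m 0) + Poly_Mapping.single 1 (Poly_Mapping.lookup m 1) +
     (Poly_Mapping.single 2 (Poly_Mapping.lookup m 2) + Poly_Mapping.single 3 (Poly_Mapping.lookup m 3)) +
     (Poly_Mapping.single 4 (Poly_Mapping.lookup m 4) + Poly_Mapping.single 5 (Poly_Mapping.lookup m 5))) k"
    proof (cases "k < 6")
      case True
      hence "k = 0 \<or> k = 1 \<or> k = 2 \<or> k = 3 \<or> k = 4 \<or> k = 5" by auto
      thus ?thesis by (auto simp: lookup_add lookup_single when_def)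
    next
      case False
      thus ?thesis using assms by (simp add: mono6_def lookup_add lookup_single when_def)
    qed
  qed
  hence "Poly_Mapping.single m (1::'a) = Poly_Mapping.single (Poly_Mapping.single 0 (Poly_Mapping.lookup m 0) + Poly_Mapping.single 1 (Poly_Mapping.lookup m 1) +
     (Poly_Mapping.single 2 (Poly_Mapping.lookup m 2) + Poly_Mapping.single 3 (Poly_Mapping.lookup m 3)) +
     (Poly_Mapping.single 4 (Poly_Mapping.lookup m 4) + Poly_Mapping.single 5 (Poly_Mapping.lookup m 5))) 1" by simp
  thus ?thesis by (simp add: mult_single)
qed

lemma poly_sum_monos:
  fixes F :: "'a::comm_ring_1 mpoly6"
  shows "F = (\<Sum>m\<in>Poly_Mapping.keys F. Const (Poly_Mapping.lookup F m) * Poly_Mapping.single m 1)"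
proof (rule poly_mapping_eqI)
  fix k
  have "Poly_Mapping.lookup (\<Sum>m\<in>Poly_Mapping.keys F. Const (Poly_Mapping.lookup F m) * Poly_Mapping.single m 1) k
     = (\<Sum>m\<in>Poly_Mapping.keys F. if k = m then Poly_Mapping.lookup F m else 0)"
  proof -
    have *: "\<And>a::'a. \<And>P. a * (if P then 1 else 0) = (if P then a else 0)" by simp
    show ?thesis by (simp add: lookup_sum lookup_Cm lookup_single when_def * eq_commute)
  qed
  also have "\<dots> = Poly_Mapping.lookup F k" by (simp add: sum.delta in_keys_iff)
  finally show "Poly_Mapping.lookup F k = Poly_Mapping.lookup (\<Sum>m\<in>Poly_Mapping.keys F. Const (Poly_Mapping.lookup F m) * Poly_Mapping.single m 1) k" ..
qed


theorem lemma2p7: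
  fixes X :: "'a::{alg_closed_field, field_char_0} pt3 set"
    and L L' :: "'a mpoly6"
  assumes finX: "finite X"
    and valid: "\<forall>P\<in>X. valid_pt P"
    and distinct: "\<forall>P\<in>X. \<forall>Q\<in>X. same_pt P Q \<longrightarrow> P = Q"
    and L: "L \<in> Rdeg (1,0,0)" "L \<noteq> 0"
    and L': "L' \<in> Rdeg (0,1,0)" "L' \<noteq> 0"
    and meets: "{P\<in>X. eval_pt L P = 0 \<and> eval_pt L' P = 0} \<noteq> {}"
    and notin: "\<not> X \<subseteq> {P. eval_pt L P = 0 \<and> eval_pt L' P = 0}"
  shows "let t1 = card (pi1 ` X); t2 = card (pi2 ` X);
             X2 = {P\<in>X. eval_pt L P = 0 \<and> eval_pt L' P = 0};
             X1 = X - X2;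
             J = ideal_sum (ideal_pts X1) (ideal_pts X2)
         in Rdeg (t1 - 1, t2 - 1, 0) = J \<inter> Rdeg (t1 - 1, t2 - 1, 0)
            \<and> (\<forall>k. J \<inter> Rdeg (t1 - 1, t2 - 1, k) = Rdeg (t1 - 1, t2 - 1, k))"
proof -
  define c0 where "c0 = Poly_Mapping.lookup L (Poly_Mapping.single 0 1)"
  define c1 where "c1 = Poly_Mapping.lookup L (Poly_Mapping.single 1 1)"
  define d0 where "d0 = Poly_Mapping.lookup L' (Poly_Mapping.single 2 1)"
  define d1 where "d1 = Poly_Mapping.lookup L' (Poly_Mapping.single 3 1)"
  have kL: "Poly_Mapping.keys L \<subseteq> {Poly_Mapping.single 0 1, Poly_Mapping.single 1 1}"
    by (rule keys_deg100[OF L(1)])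
  have kL': "Poly_Mapping.keys L' \<subseteq> {Poly_Mapping.single 2 1, Poly_Mapping.single 3 1}"
    by (rule keys_deg010[OF L'(1)])
  have Lform: "L = Const c0 * Var 0 + Const c1 * Var 1"
    using keys_lin_form[OF kL] by (simp add: c0_def c1_def)
  have L'form: "L' = Const d0 * Var 2 + Const d1 * Var 3"
    using keys_lin_form[OF kL'] by (simp add: d0_def d1_def)
  have Leval: "\<And>P. eval_pt L P = c0 * fst (fst P) + c1 * snd (fst P)"
    using eval_lin_form[OF kL] unfolding coord_simps c0_def c1_def by simp
  have L'eval: "\<And>P. eval_pt L' P = d0 * fst (fst (snd P)) + d1 * snd (fst (snd P))"
    using eval_lin_form[OF kL'] unfolding coord_simps d0_def d1_def by simp
  have cnz: "(c0, c1) \<noteq> (0,0)" using L(2) Lform by (auto simp: Const_0)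
  have dnz: "(d0, d1) \<noteq> (0,0)" using L'(2) L'form by (auto simp: Const_0)
  define X2 where "X2 = {P\<in>X. eval_pt L P = 0 \<and> eval_pt L' P = 0}"
  define X1 where "X1 = X - X2"
  define J where "J = ideal_sum (ideal_pts X1) (ideal_pts X2)"
  obtain P0 where P0: "P0 \<in> X" "eval_pt L P0 = 0" "eval_pt L' P0 = 0" using meets by blast
  define A where "A = fst P0"
  define B where "B = fst (snd P0)"
  have Anz: "A \<noteq> (0,0)" and Bnz: "B \<noteq> (0,0)" using valid P0(1) by (auto simp: A_def B_def valid_pt_def)
  have LA: "c0 * fst A + c1 * snd A = 0" using P0(2) Leval by (simp add: A_def)
  have LB: "d0 * fst B + d1 * snd B = 0" using P0(3) L'eval by (simp add: B_def)
  define rep :: "('a \<times> 'a) set \<Rightarrow> 'a \<times> 'a" where "rep C = (SOME w. w \<in> C)" for C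
  define Cs1 where "Cs1 = pi1 ` X - {pi1 P0}"
  define Cs2 where "Cs2 = pi2 ` X - {pi2 P0}"
  define G where "G = (\<Prod>C\<in>Cs1. ell 0 1 (rep C) :: 'a mpoly6)"
  define H where "H = (\<Prod>C\<in>Cs2. ell 2 3 (rep C) :: 'a mpoly6)"
  have fin1: "finite Cs1" and fin2: "finite Cs2" using finX by (auto simp: Cs1_def Cs2_def)
  have rep1: "\<And>P. P \<in> X \<Longrightarrow> rep (pi1 P) \<in> pi1 P"
    unfolding rep_def pi1_def by (rule someI[of _ "fst P" for P], rule self_class) (use valid in \<open>auto simp: valid_pt_def\<close>)
  have rep2: "\<And>P. P \<in> X \<Longrightarrow> rep (pi2 P) \<in> pi2 P"
    unfolding rep_def pi2_def by (rule someI[of _ "fst (snd P)" for P], rule self_class) (use valid in \<open>auto simp: valid_pt_def\<close>)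
  have good1: "\<forall>C\<in>Cs1. c0 * fst (rep C) + c1 * snd (rep C) \<noteq> 0"
  proof
    fix C assume C: "C \<in> Cs1"
    then obtain P where P: "P \<in> X" "C = pi1 P" "C \<noteq> pi1 P0" unfolding Cs1_def by blast
    define w where "w = rep C"
    have w: "w \<in> proj_class (fst P)" using rep1[OF P(1)] P(2) by (simp add: w_def pi1_def)
    have Pnz: "fst P \<noteq> (0,0)" using valid P(1) by (auto simp: valid_pt_def)
    show "c0 * fst (rep C) + c1 * snd (rep C) \<noteq> 0"
    proof
      assume "c0 * fst (rep C) + c1 * snd (rep C) = 0"
      hence "fst A * snd w = snd A * fst w" using v1[OF cnz LA] by (simp add: w_def)
      hence "w \<in> proj_class A" using w by (simp add: mem_class)
      hence "proj_class w = proj_class A" by (rule class_eq[OF Anz])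
      moreover have "proj_class w = proj_class (fst P)" by (rule class_eq[OF Pnz w])
      ultimately show False using P(2,3) by (simp add: pi1_def A_def)
    qed
  qed
  have good2: "\<forall>C\<in>Cs2. d0 * fst (rep C) + d1 * snd (rep C) \<noteq> 0"
  proof
    fix C assume C: "C \<in> Cs2"
    then obtain P where P: "P \<in> X" "C = pi2 P" "C \<noteq> pi2 P0" unfolding Cs2_def by blast
    define w where "w = rep C"
    have w: "w \<in> proj_class (fst (snd P))" using rep2[OF P(1)] P(2) by (simp add: w_def pi2_def)
    have Pnz: "fst (snd P) \<noteq> (0,0)" using valid P(1) by (auto simp: valid_pt_def)
    show "d0 * fst (rep C) + d1 * snd (rep C) \<noteq> 0"
    proof
      assume "d0 * fst (rep C) + d1 * snd (rep C) = 0"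
      hence "fst B * snd w = snd B * fst w" using v1[OF dnz LB] by (simp add: w_def)
      hence "w \<in> proj_class B" using w by (simp add: mem_class)
      hence "proj_class w = proj_class B" by (rule class_eq[OF Bnz])
      moreover have "proj_class w = proj_class (fst (snd P))" by (rule class_eq[OF Pnz w])
      ultimately show False using P(2,3) by (simp add: pi2_def B_def)
    qed
  qed
  have X1prop: "\<And>P. P \<in> X1 \<Longrightarrow> pi1 P \<in> Cs1 \<or> pi2 P \<in> Cs2"
  proof -
    fix P assume "P \<in> X1"
    hence P: "P \<in> X" "eval_pt L P \<noteq> 0 \<or> eval_pt L' P \<noteq> 0" by (auto simp: X1_def X2_def)
    show "pi1 P \<in> Cs1 \<or> pi2 P \<in> Cs2"
    proof (cases "eval_pt L P \<noteq> 0")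
      case True
      have "pi1 P \<noteq> pi1 P0"
      proof
        assume "pi1 P = pi1 P0"
        hence "A \<in> proj_class (fst P)" using self_class[OF Anz] by (simp add: pi1_def A_def)
        hence "fst A * snd (fst P) = snd A * fst (fst P)" by (simp add: mem_class mult.commute)
        hence "c0 * fst (fst P) + c1 * snd (fst P) = 0"
          using v2[of "fst A" "snd A" "snd (fst P)" "fst (fst P)" c0 c1] Anz LA by (cases A) auto
        thus False using True Leval by simp
      qed
      thus ?thesis using P(1) by (simp add: Cs1_def)
    next
      case False
      hence E: "eval_pt L' P \<noteq> 0" using P(2) by simp
      have "pi2 P \<noteq> pi2 P0"
      proof
        assume "pi2 P = pi2 P0"
        hence "B \<in> proj_class (fst (snd P))" using self_class[OF Bnz] by (simp add: pi2_def B_def)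
        hence "fst B * snd (fst (snd P)) = snd B * fst (fst (snd P))" by (simp add: mem_class mult.commute)
        hence "d0 * fst (fst (snd P)) + d1 * snd (fst (snd P)) = 0"
          using v2[of "fst B" "snd B" "snd (fst (snd P))" "fst (fst (snd P))" d0 d1] Bnz LB by (cases B) auto
        thus False using E L'eval by simp
      qed
      thus ?thesis using P(1) by (simp add: Cs2_def)
    qed
  qed
  have GR: "G \<in> Rring" unfolding G_def by (rule Rring_prod) (simp add: Rring_ell)
  have HR: "H \<in> Rring" unfolding H_def by (rule Rring_prod) (simp add: Rring_ell)
  have LR: "L \<in> Rring" "L' \<in> Rring" unfolding Lform L'form
    by (auto intro!: Rring_add Rring_mult Rring_Const Rring_Var)
  define V where "V = {G * H * r + L * p + L' * q | r p q. r \<in> Rring \<and> p \<in> Rring \<and> q \<in> Rring}"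
  have VJ: "V \<subseteq> J"
  proof
    fix f assume "f \<in> V"
    then obtain r p q where rpq: "r \<in> Rring" "p \<in> Rring" "q \<in> Rring" "f = G * H * r + L * p + L' * q"
      by (auto simp: V_def)
    have I1: "G * H * r \<in> ideal_pts X1"
      unfolding ideal_pts_def
    proof (intro IntI INT_I)
      show "G * H * r \<in> Rring" using GR HR rpq by (intro Rring_mult)
    next
      fix P assume PX1: "P \<in> X1"
      hence PX: "P \<in> X" by (simp add: X1_def)
      show "G * H * r \<in> ideal_pt P"
      proof (cases "pi1 P \<in> Cs1")
        case True
        have Pnz: "fst P \<noteq> (0,0)" using valid PX by (auto simp: valid_pt_def)
        have "rep (pi1 P) \<in> proj_class (fst P)" using rep1[OF PX] by (simp add: pi1_def)
        then obtain \<mu> where "fst (rep (pi1 P)) = \<mu> * fst (fst P)" "snd (rep (pi1 P)) = \<mu> * snd (fst P)"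
          using pv4[OF Pnz, of "rep (pi1 P)"] by (auto simp: mem_class)
        hence e: "ell 0 1 (rep (pi1 P)) = Const \<mu> * ell 0 1 (fst P)" by (rule ell_scale)
        have "G = ell 0 1 (rep (pi1 P)) * (\<Prod>C\<in>Cs1 - {pi1 P}. ell 0 1 (rep C))"
          unfolding G_def using prod.remove[OF fin1 True] .
        hence eq: "G * H * r = (Const \<mu> * (\<Prod>C\<in>Cs1 - {pi1 P}. ell 0 1 (rep C)) * H * r) * ell 0 1 (fst P)"
          unfolding e by (simp only: ac_simps)
        have R: "Const \<mu> * (\<Prod>C\<in>Cs1 - {pi1 P}. ell 0 1 (rep C)) * H * r \<in> Rring"
          using HR rpq by (intro Rring_mult Rring_Const Rring_prod) (auto simp: Rring_ell)
        have mem: "ell 0 1 (fst P) \<in> {ell 0 1 (fst P), ell 2 3 (fst (snd P)), ell 4 5 (snd (snd P))}" by simp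
        show ?thesis unfolding eq ideal_pt_ell by (rule gen_ideal_one[OF mem R])
      next
        case False
        hence True: "pi2 P \<in> Cs2" using X1prop[OF PX1] by simp
        have Pnz: "fst (snd P) \<noteq> (0,0)" using valid PX by (auto simp: valid_pt_def)
        have "rep (pi2 P) \<in> proj_class (fst (snd P))" using rep2[OF PX] by (simp add: pi2_def)
        then obtain \<mu> where "fst (rep (pi2 P)) = \<mu> * fst (fst (snd P))" "snd (rep (pi2 P)) = \<mu> * snd (fst (snd P))"
          using pv4[OF Pnz, of "rep (pi2 P)"] by (auto simp: mem_class)
        hence e: "ell 2 3 (rep (pi2 P)) = Const \<mu> * ell 2 3 (fst (snd P))" by (rule ell_scale)
        have "H = ell 2 3 (rep (pi2 P)) * (\<Prod>C\<in>Cs2 - {pi2 P}. ell 2 3 (rep C))"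
          unfolding H_def using prod.remove[OF fin2 True] .
        hence eq: "G * H * r = (Const \<mu> * (\<Prod>C\<in>Cs2 - {pi2 P}. ell 2 3 (rep C)) * G * r) * ell 2 3 (fst (snd P))"
          unfolding e by (simp only: ac_simps)
        have R: "Const \<mu> * (\<Prod>C\<in>Cs2 - {pi2 P}. ell 2 3 (rep C)) * G * r \<in> Rring"
          using GR rpq by (intro Rring_mult Rring_Const Rring_prod) (auto simp: Rring_ell)
        have mem: "ell 2 3 (fst (snd P)) \<in> {ell 0 1 (fst P), ell 2 3 (fst (snd P)), ell 4 5 (snd (snd P))}" by simp
        show ?thesis unfolding eq ideal_pt_ell by (rule gen_ideal_one[OF mem R])
      qed
    qed
    have I2: "L * p + L' * q \<in> ideal_pts X2"
      unfolding ideal_pts_def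
    proof (intro IntI INT_I)
      show "L * p + L' * q \<in> Rring" using LR rpq by (intro Rring_mult Rring_add)
    next
      fix P assume PX2: "P \<in> X2"
      hence PX: "P \<in> X" and E: "eval_pt L P = 0" "eval_pt L' P = 0" by (auto simp: X2_def)
      have Pnz: "(fst (fst P), snd (fst P)) \<noteq> (0,0)" "(fst (fst (snd P)), snd (fst (snd P))) \<noteq> (0,0)"
        using valid PX by (auto simp: valid_pt_def)
      obtain \<kappa> where k: "c0 = \<kappa> * snd (fst P)" "c1 = - \<kappa> * fst (fst P)"
        using v5[OF Pnz(1), of c0 c1] E(1) Leval by auto
      obtain \<kappa>' where k': "d0 = \<kappa>' * snd (fst (snd P))" "d1 = - \<kappa>' * fst (fst (snd P))"
        using v5[OF Pnz(2), of d0 d1] E(2) L'eval by auto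
      have "L = Const \<kappa> * ell 0 1 (fst P)" unfolding Lform by (rule lin_prop[OF k])
      moreover have "L' = Const \<kappa>' * ell 2 3 (fst (snd P))" unfolding L'form by (rule lin_prop[OF k'])
      ultimately have "L * p + L' * q = (Const \<kappa> * p) * ell 0 1 (fst P) + (Const \<kappa>' * q) * ell 2 3 (fst (snd P))"
        by (simp only: ac_simps)
      moreover have "(Const \<kappa> * p) \<in> Rring" "(Const \<kappa>' * q) \<in> Rring" using rpq by (auto intro: Rring_mult Rring_Const)
      moreover have "ell 0 1 (fst P) \<in> {ell 0 1 (fst P), ell 2 3 (fst (snd P)), ell 4 5 (snd (snd P))}"
        "ell 2 3 (fst (snd P)) \<in> {ell 0 1 (fst P), ell 2 3 (fst (snd P)), ell 4 5 (snd (snd P))}" by simp_all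
      ultimately show "L * p + L' * q \<in> ideal_pt P" unfolding ideal_pt_ell
        using gen_ideal_two by metis
    qed
    show "f \<in> J" unfolding J_def ideal_sum_def using I1 I2 rpq(4) by (auto simp: add.assoc)
  qed
  have monoV: "\<And>m. mono6 m \<Longrightarrow> tridegree m = (card Cs1, card Cs2, k) \<Longrightarrow> Poly_Mapping.single m 1 \<in> V" for k
  proof -
    fix m :: "nat \<Rightarrow>\<^sub>0 nat" assume m: "mono6 m" "tridegree m = (card Cs1, card Cs2, k)"
    have s1: "Poly_Mapping.lookup m 0 + Poly_Mapping.lookup m 1 = card Cs1"
      and s2: "Poly_Mapping.lookup m 2 + Poly_Mapping.lookup m 3 = card Cs2"
      using m(2) by (auto simp: tridegree_def)
    obtain \<kappa> p where p: "p \<in> Rring" "Poly_Mapping.single (Poly_Mapping.single 0 (Poly_Mapping.lookup m 0) + Poly_Mapping.single 1 (Poly_Mapping.lookup m 1)) 1 = Const \<kappa> * G + L * p"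
      using mono_T[where S=Cs1 and r=rep and ca=c0 and cb=c1 and u=0 and v=1, OF fin1 good1] s1
      unfolding G_def Lform by fastforce
    obtain \<kappa>' q where q: "q \<in> Rring" "Poly_Mapping.single (Poly_Mapping.single 2 (Poly_Mapping.lookup m 2) + Poly_Mapping.single 3 (Poly_Mapping.lookup m 3)) 1 = Const \<kappa>' * H + L' * q"
      using mono_T[where S=Cs2 and r=rep and ca=d0 and cb=d1 and u=2 and v=3, OF fin2 good2] s2
      unfolding H_def L'form by fastforce
    define mz :: "'a mpoly6" where "mz = Poly_Mapping.single (Poly_Mapping.single 4 (Poly_Mapping.lookup m 4) + Poly_Mapping.single 5 (Poly_Mapping.lookup m 5)) 1"
    have mzR: "mz \<in> Rring" unfolding mz_def by (intro Rring_single mono6_add mono6_single) auto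
    have "Poly_Mapping.single m 1 = (Const \<kappa> * G + L * p) * (Const \<kappa>' * H + L' * q) * mz"
      unfolding mz_def p(2)[symmetric] q(2)[symmetric] by (rule mono_decomp[OF m(1)])
    also have "\<dots> = G * H * (Const \<kappa> * Const \<kappa>' * mz) + L * (p * (Const \<kappa>' * H + L' * q) * mz) + L' * (Const \<kappa> * G * q * mz)"
      by (simp add: distrib_left distrib_right ac_simps)
    finally show "Poly_Mapping.single m 1 \<in> V" unfolding V_def
      using p(1) q(1) mzR GR HR LR by (blast intro: Rring_mult Rring_add Rring_Const)
  qed
  have V0: "0 \<in> V" unfolding V_def using Rring_0 by force
  have Vadd: "x + y \<in> V" if xV: "x \<in> V" and yV: "y \<in> V" for x y
  proof -
    obtain r p q where a: "r \<in> Rring" "p \<in> Rring" "q \<in> Rring" "x = G * H * r + L * p + L' * q"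
      using xV unfolding V_def by blast
    obtain r' p' q' where b: "r' \<in> Rring" "p' \<in> Rring" "q' \<in> Rring" "y = G * H * r' + L * p' + L' * q'"
      using yV unfolding V_def by blast
    have "x + y = G * H * (r + r') + L * (p + p') + L' * (q + q')"
      unfolding a(4) b(4) by (simp add: distrib_left ac_simps)
    thus ?thesis unfolding V_def using a b by (blast intro: Rring_add)
  qed
  have Vsc: "Const c * x \<in> V" if xV: "x \<in> V" for x c
  proof -
    obtain r p q where a: "r \<in> Rring" "p \<in> Rring" "q \<in> Rring" "x = G * H * r + L * p + L' * q"
      using xV unfolding V_def by blast
    have "Const c * x = G * H * (Const c * r) + L * (Const c * p) + L' * (Const c * q)"
      unfolding a(4) by (simp add: distrib_left ac_simps)
    thus ?thesis unfolding V_def using a by (blast intro: Rring_mult Rring_Const)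
  qed
  have Vsum: "(\<forall>m\<in>T. f m \<in> V) \<longrightarrow> sum f T \<in> V" for T f
    by (induction T rule: infinite_finite_induct) (auto intro: V0 Vadd)
  have RdV: "Rdeg (card Cs1, card Cs2, k) \<subseteq> V" for k
  proof
    fix F :: "'a mpoly6" assume F: "F \<in> Rdeg (card Cs1, card Cs2, k)"
    have "(\<Sum>m\<in>Poly_Mapping.keys F. Const (Poly_Mapping.lookup F m) * Poly_Mapping.single m 1) \<in> V"
      using F by (intro Vsum[rule_format] ballI Vsc monoV) (auto simp: Rdeg_def)
    thus "F \<in> V" using poly_sum_monos[of F] by simp
  qed
  have c1: "card Cs1 = card (pi1 ` X) - 1" "card Cs2 = card (pi2 ` X) - 1"
    using P0(1) finX by (simp_all add: Cs1_def Cs2_def card_Diff_singleton)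
  have main: "\<And>k. Rdeg (card (pi1 ` X) - 1, card (pi2 ` X) - 1, k) \<subseteq> J"
    using RdV VJ c1 by auto
  show ?thesis unfolding Let_def X2_def[symmetric] X1_def[symmetric] J_def[symmetric]
    using main by blast
qed

end
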